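(* The constrained equal-distance rule and the proportional rule are obviously manipulable on $\mathcal{E}_{\mathcal{SP}}$.
   Context: Let $N=\{1,\dots,n\}$ be a finite set of agents. A preference $R_i$ is a continuous complete preorder on $\mathbb{R}_+\cup\{\infty\}$ ($P_i$ strict part); its peak $p(R_i)$ is the set of maximal elements. $R_i$ is single-peaked if $p(R_i)$ is a singleton (identified with its element) and for $x,x'\in\mathbb{R}_+$, $xP_ix'$ whenever $x'<x\le p(R_i)$ or $p(R_i)\le x<x'$; $\mathcal{SP}$ is the set of these. An economy is $(R,\Omega)$, $R\in\mathcal{SP}^n$, $\Omega>0$; $\mathcal{E}_{\mathcal{SP}}$ is the set of economies; a rule is a map $\varphi:\mathcal{E}_{\mathcal{SP}}\to\mathbb{R}^n_+$ with $\sum_j\varphi_j=\Omega$. Constrained equal-distance rule $CED$: $CED_i(R,\Omega)=\max\{p(R_i)-d,0\}$ if $\sum_jp(R_j)\ge\Omega$ and $CED_i(R,\Omega)=p(R_i)+d$ if $\sum_jp(R_j)<\Omega$, where $d\ge0$ solves $\sum_jCED_j(R,\Omega)=\Omega$. Proportional rule $Pro$: $Pro_i(R,\Omega)=\frac{p(R_i)}{\sum_jp(R_j)}\Omega$ if $\sum_jp(R_j)>0$ and $\Omega/n$ otherwise. Option set $O^\varphi(R_i,\Omega)=\{\varphi_i(R_i,R_{-i},\Omega):R_{-i}\in\mathcal{SP}^{n-1}\}$. $R_i'$ is a manipulation at $(R_i,\Omega)$ if $\varphi_i(R_i',R_{-i},\Omega)P_i\varphi_i(R_i,R_{-i},\Omega)$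 for some $R_{-i}$; an obvious manipulation if moreover each $x'\in O^\varphi(R_i',\Omega)$ satisfies $x'P_ix$ for some $x\in O^\varphi(R_i,\Omega)$. A rule is obviously manipulable if it admits an obvious manipulation. *)

theory Defs
  imports "HOL-Analysis.Analysis" "HOL-Library.Extended_Nonnegative_Real"
begin

text \<open>The outcome space R+ \<union> {\<infinity>} is the type ennreal = [0,\<infinity>].
  A preference is a binary relation on it (R x y: x is at least as good as y).\<close>
type_synonym pref = "ennreal \<Rightarrow> ennreal \<Rightarrow> bool"

definition strict_pref :: "pref \<Rightarrow> ennreal \<Rightarrow> ennreal \<Rightarrow> bool" where
  "strict_pref R x y \<longleftrightarrow> R x y \<and> \<not> R y x"

definition continuous_complete_preorder :: "pref \<Rightarrow> bool" where
  "continuous_complete_preorder R \<longleftrightarrow>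
     (\<forall>x y. R x y \<or> R y x) \<and>
     (\<forall>x y z. R x y \<longrightarrow> R y z \<longrightarrow> R x z) \<and>
     (\<forall>x. closed {y. R y x} \<and> closed {y. R x y})"

definition peak_set :: "pref \<Rightarrow> ennreal set" where
  "peak_set R = {x. \<forall>y. R x y}"

definition SP :: "pref set" where
  "SP = {R. continuous_complete_preorder R \<and>
         (\<exists>p::real. 0 \<le> p \<and> peak_set R = {ennreal p} \<and>
            (\<forall>x x'::real. 0 \<le> x' \<longrightarrow> 0 \<le> x \<longrightarrow>
               ((x' < x \<and> x \<le> p) \<or> (p \<le> x \<and> x < x')) \<longrightarrow>
               strict_pref R (ennreal x) (ennreal x')))}"

definition peak :: "pref \<Rightarrow> real" where
  "peak R = enn2real (the_elem (peak_set R))"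

type_synonym 'n rule = "('n \<Rightarrow> pref) \<Rightarrow> real \<Rightarrow> 'n \<Rightarrow> real"

definition CED :: "('n::finite) rule" where
  "CED R \<Omega> i =
     (if (\<Sum>j\<in>UNIV. peak (R j)) \<ge> \<Omega>
      then (let d = (THE d. d \<ge> 0 \<and> (\<Sum>j\<in>UNIV. max (peak (R j) - d) 0) = \<Omega>)
            in max (peak (R i) - d) 0)
      else (let d = (THE d. d \<ge> 0 \<and> (\<Sum>j\<in>UNIV. peak (R j) + d) = \<Omega>)
            in peak (R i) + d))"

definition Pro :: "('n::finite) rule" where
  "Pro R \<Omega> i =
     (if (\<Sum>j\<in>UNIV. peak (R j)) > 0
      then peak (R i) / (\<Sum>j\<in>UNIV. peak (R j)) * \<Omega>
      else \<Omega> / real CARD('n))"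

definition option_set :: "'n rule \<Rightarrow> 'n \<Rightarrow> pref \<Rightarrow> real \<Rightarrow> real set" where
  "option_set \<phi> i Ri \<Omega> = {\<phi> (R(i := Ri)) \<Omega> i | R. \<forall>j. R j \<in> SP}"

definition manipulation :: "'n rule \<Rightarrow> 'n \<Rightarrow> pref \<Rightarrow> pref \<Rightarrow> real \<Rightarrow> bool" where
  "manipulation \<phi> i Ri Ri' \<Omega> \<longleftrightarrow>
     (\<exists>R. (\<forall>j. R j \<in> SP) \<and>
        strict_pref Ri (ennreal (\<phi> (R(i := Ri')) \<Omega> i)) (ennreal (\<phi> (R(i := Ri)) \<Omega> i)))"

definition obvious_manipulation :: "'n rule \<Rightarrow> 'n \<Rightarrow> pref \<Rightarrow> pref \<Rightarrow> real \<Rightarrow> bool" where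
  "obvious_manipulation \<phi> i Ri Ri' \<Omega> \<longleftrightarrow>
     manipulation \<phi> i Ri Ri' \<Omega> \<and>
     (\<forall>x'\<in>option_set \<phi> i Ri' \<Omega>. \<exists>x\<in>option_set \<phi> i Ri \<Omega>.
        strict_pref Ri (ennreal x') (ennreal x))"

definition obviously_manipulable :: "'n rule \<Rightarrow> bool" where
  "obviously_manipulable \<phi> \<longleftrightarrow>
     (\<exists>i Ri Ri' \<Omega>. Ri \<in> SP \<and> Ri' \<in> SP \<and> \<Omega> > 0 \<and> obvious_manipulation \<phi> i Ri Ri' \<Omega>)"

end

theory Submission
  imports Defs
begin

lemma cont_minus_c: "continuous_on UNIV (\<lambda>x::ennreal. x - ennreal c)"
proof (rule continuous_at_imp_continuous_on, intro ballI)
  fix x :: ennreal assume "x \<in> UNIV"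
  show "isCont (\<lambda>x::ennreal. x - ennreal c) x"
  proof (cases "x = top")
    case False
    then show ?thesis unfolding continuous_at
      by (intro tendsto_diff_ennreal tendsto_ident_at tendsto_const) auto
  next
    case True
    have "((\<lambda>x::ennreal. x - ennreal c) \<longlongrightarrow> top) (at top)"
    proof (rule order_tendstoI)
      fix y :: ennreal assume "y < top"
      then have "y + ennreal c < top" by (simp add: less_top[symmetric])
      then have "eventually (\<lambda>x. y + ennreal c < x) (at top)"
        using order_tendstoD(1)[OF tendsto_ident_at] by blast
      then show "eventually (\<lambda>x. y < x - ennreal c) (at top)"
        apply eventually_elim
        by (subst less_diff_eq_ennreal) auto
    qed auto
    then show ?thesis using True unfolding continuous_at by simp
  qed
qed

definition dd :: "real \<Rightarrow> ennreal \<Rightarrow> ennreal" where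
  "dd p x = (x - ennreal p) + (ennreal p - min x (ennreal p))"

definition pr :: "real \<Rightarrow> pref" where
  "pr p = (\<lambda>x y. dd p x \<le> dd p y)"

lemma cont_dd: "continuous_on UNIV (dd p)"
proof -
  have "continuous_on UNIV (\<lambda>x::ennreal. ennreal p - min x (ennreal p))"
    by (intro continuous_on_diff_ennreal continuous_on_const continuous_on_min continuous_on_id)
       (auto simp: min_def top_unique)
  then show ?thesis unfolding dd_def
    by (intro continuous_on_add cont_minus_c)
qed

lemma dd_fin: assumes "0 \<le> a" "0 \<le> p" shows "dd p (ennreal a) = ennreal \<bar>a - p\<bar>"
proof (cases "a \<le> p")
  case True
  then have "min (ennreal a) (ennreal p) = ennreal a" by (simp add: min_def ennreal_leI)
  then show ?thesis using True assms unfolding dd_def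
    by (simp add: ennreal_minus ennreal_eq_0_iff)
next
  case False
  then have "min (ennreal a) (ennreal p) = ennreal p" using assms
    by (simp add: min_def ennreal_le_iff)
  then show ?thesis using False assms unfolding dd_def
    by (simp add: ennreal_minus)
qed

lemma dd_top: "dd p top = top"
  unfolding dd_def by simp

lemma strict_pr: assumes "0 \<le> a" "0 \<le> b" "0 \<le> p"
  shows "strict_pref (pr p) (ennreal a) (ennreal b) \<longleftrightarrow> \<bar>a - p\<bar> < \<bar>b - p\<bar>"
  using assms unfolding strict_pref_def pr_def
  by (auto simp: dd_fin ennreal_le_iff)

lemma ps_pr: assumes "0 \<le> p" shows "peak_set (pr p) = {ennreal p}"
proof
  show "{ennreal p} \<subseteq> peak_set (pr p)"
    using assms by (auto simp: peak_set_def pr_def dd_fin)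
next
  show "peak_set (pr p) \<subseteq> {ennreal p}"
  proof
    fix x assume "x \<in> peak_set (pr p)"
    then have "dd p x \<le> dd p (ennreal p)" by (auto simp: peak_set_def pr_def)
    then have z: "dd p x \<le> 0" using assms by (simp add: dd_fin)
    show "x \<in> {ennreal p}"
    proof (cases x rule: ennreal_cases)
      case (real r)
      then show ?thesis using z assms by (simp add: dd_fin)
    next
      case top
      then show ?thesis using z by (simp add: dd_top)
    qed
  qed
qed

lemma pr_SP: assumes "0 \<le> p" shows "pr p \<in> SP"
proof -
  have ccp: "continuous_complete_preorder (pr p)"
    unfolding continuous_complete_preorder_def pr_def
    using cont_dd[of p]
    by (auto intro!: closed_Collect_le continuous_on_const)
  show ?thesis unfolding SP_def
    using ccp ps_pr[OF assms] assms by (auto simp: strict_pr)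
qed

lemma peak_pr: "0 \<le> p \<Longrightarrow> peak (pr p) = p"
  by (simp add: peak_def ps_pr)

lemma peak_SP: "R \<in> SP \<Longrightarrow> 0 \<le> peak R"
  unfolding SP_def peak_def by auto

lemma card_pos: "0 < real CARD('n::finite)"
  by simp

lemma CED_excess:
  fixes R :: "'n::finite \<Rightarrow> pref"
  assumes "(\<Sum>j\<in>UNIV. peak (R j)) < \<Omega>"
  shows "CED R \<Omega> i = peak (R i) + (\<Omega> - (\<Sum>j\<in>UNIV. peak (R j))) / real CARD('n)"
proof -
  let ?S = "\<Sum>j\<in>UNIV. peak (R j)"
  let ?N = "real CARD('n)"
  have N: "0 < ?N" by simp
  have eq: "(\<Sum>j\<in>UNIV. peak (R j) + d) = ?S + ?N * d" for d
    by (simp add: sum.distrib)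
  have "(THE d. d \<ge> 0 \<and> (\<Sum>j\<in>UNIV. peak (R j) + d) = \<Omega>) = (\<Omega> - ?S) / ?N"
  proof (rule the_equality)
    show "(\<Omega> - ?S) / ?N \<ge> 0 \<and> (\<Sum>j\<in>UNIV. peak (R j) + (\<Omega> - ?S) / ?N) = \<Omega>"
      using N assms by (simp add: eq)
  next
    fix d assume "d \<ge> 0 \<and> (\<Sum>j\<in>UNIV. peak (R j) + d) = \<Omega>"
    then have "?S + ?N * d = \<Omega>" by (simp add: eq)
    then show "d = (\<Omega> - ?S) / ?N" using N by (simp add: field_simps)
  qed
  then show ?thesis using assms unfolding CED_def by (simp add: Let_def)
qed

lemma CED_short:
  fixes R :: "'n::finite \<Rightarrow> pref"
  assumes pk: "\<And>j. 0 \<le> peak (R j)" and S: "(\<Sum>j\<in>UNIV. peak (R j)) \<ge> \<Omega>" and O: "\<Omega> > 0"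
  shows "\<exists>d\<ge>0. CED R \<Omega> i = max (peak (R i) - d) 0"
proof -
  let ?S = "\<Sum>j\<in>UNIV. peak (R j)"
  define f where "f d = (\<Sum>j\<in>UNIV. max (peak (R j) - d) 0)" for d
  have S0: "0 \<le> ?S" using pk by (simp add: sum_nonneg)
  have le: "peak (R j) \<le> ?S" for j
    using pk by (intro member_le_sum) auto
  have fS: "f ?S = 0" unfolding f_def using le by (simp add: max_def)
  have f0: "f 0 = ?S" unfolding f_def using pk by (intro sum.cong) (auto simp: max_def intro: antisym)
  have cont: "continuous_on {0..?S} f" unfolding f_def
    by (intro continuous_intros)
  obtain d where d: "0 \<le> d" "d \<le> ?S" "f d = \<Omega>"
    using IVT2'[of f ?S \<Omega> 0, OF _ _ S0 cont] fS f0 S O by auto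
  have uniq: "d' = d" if "0 \<le> d'" "f d' = \<Omega>" for d'
  proof (rule ccontr)
    assume ne: "d' \<noteq> d"
    have main: "f b < f a" if ab: "a < b" "f a = \<Omega>" for a b
    proof -
      have "\<exists>j. peak (R j) > a"
      proof (rule ccontr)
        assume "\<not> ?thesis"
        then have "f a = 0" unfolding f_def by (intro sum.neutral) (auto simp: max_def not_less)
        then show False using ab O by simp
      qed
      then obtain j where j: "peak (R j) > a" by blast
      have jj: "max (peak (R j) - b) 0 < max (peak (R j) - a) 0" using ab j by (auto simp: max_def)
      show ?thesis unfolding f_def
      proof (rule sum_strict_mono_ex1)
        show "finite (UNIV :: 'n set)" by simp
        show "\<forall>x\<in>UNIV. max (peak (R x) - b) 0 \<le> max (peak (R x) - a) 0"
          using ab(1) by (auto simp: max_def)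
        show "\<exists>x\<in>UNIV. max (peak (R x) - b) 0 < max (peak (R x) - a) 0"
          using jj by blast
      qed
    qed
    show False
    proof (cases "d' < d")
      case True then show ?thesis using main[of d' d] that d by simp
    next
      case False then have "d < d'" using ne by simp
      then show ?thesis using main[of d d'] that d by simp
    qed
  qed
  have "(THE d. d \<ge> 0 \<and> f d = \<Omega>) = d"
    by (rule the_equality) (use d uniq in blast)+
  then have th: "(THE d. d \<ge> 0 \<and> (\<Sum>j\<in>UNIV. max (peak (R j) - d) 0) = \<Omega>) = d"
    unfolding f_def .
  have "CED R \<Omega> i = max (peak (R i) - d) 0"
    using S unfolding CED_def Let_def th by simp
  then show ?thesis using d by blast
qed

lemma SP_upd: "\<forall>j. R j \<in> SP \<Longrightarrow> 0 \<le> q \<Longrightarrow> 0 \<le> peak ((R(i := pr q)) j)"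
  by (auto simp: peak_SP pr_SP)

lemma sum_prof:
  assumes "0 \<le> q"
  shows "(\<Sum>j\<in>UNIV. peak (((\<lambda>_::'n::finite. pr 0)(i := pr q)) j)) = q"
proof -
  have "peak (((\<lambda>_::'n. pr 0)(i := pr q)) j) = (if j = i then q else 0)" for j
    using assms by (simp add: peak_pr)
  then show ?thesis by simp
qed

lemma generic_om:
  fixes \<phi> :: "('n::finite) rule" and i :: 'n
  assumes O: "\<Omega> > 0"
    and bound: "\<And>R. \<forall>j. R j \<in> SP \<Longrightarrow> 0 \<le> \<phi> (R(i := pr 0)) \<Omega> i \<and> \<phi> (R(i := pr 0)) \<Omega> i \<le> 2"
    and T: "\<phi> ((\<lambda>_. pr 0)(i := pr 1)) \<Omega> i = T" "T \<ge> 0" "\<bar>T - 1\<bar> > 1"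
    and M: "\<phi> ((\<lambda>_. pr 0)(i := pr 0)) \<Omega> i = M" "M \<ge> 0" "\<bar>M - 1\<bar> < \<bar>T - 1\<bar>"
  shows "obviously_manipulable \<phi>"
proof -
  have SP0: "\<forall>j. (\<lambda>_::'n. pr 0) j \<in> SP" by (simp add: pr_SP)
  have man: "manipulation \<phi> i (pr 1) (pr 0) \<Omega>"
    unfolding manipulation_def
    using SP0 T M by (intro exI[of _ "\<lambda>_. pr 0"]) (auto simp: strict_pr)
  have Tin: "T \<in> option_set \<phi> i (pr 1) \<Omega>"
    unfolding option_set_def using SP0 T(1) by blast
  have all: "\<forall>x'\<in>option_set \<phi> i (pr 0) \<Omega>. \<exists>x\<in>option_set \<phi> i (pr 1) \<Omega>.
        strict_pref (pr 1) (ennreal x') (ennreal x)"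
  proof
    fix x' assume "x' \<in> option_set \<phi> i (pr 0) \<Omega>"
    then obtain R where R: "\<forall>j. R j \<in> SP" "x' = \<phi> (R(i := pr 0)) \<Omega> i"
      unfolding option_set_def by blast
    then have "0 \<le> x'" "x' \<le> 2" using bound by auto
    then have "strict_pref (pr 1) (ennreal x') (ennreal T)"
      using T by (subst strict_pr) auto
    then show "\<exists>x\<in>option_set \<phi> i (pr 1) \<Omega>. strict_pref (pr 1) (ennreal x') (ennreal x)"
      using Tin by blast
  qed
  show ?thesis unfolding obviously_manipulable_def obvious_manipulation_def
    using man all O by (intro exI[of _ i] exI[of _ "pr 1"] exI[of _ "pr 0"] exI[of _ \<Omega>])
      (auto simp: pr_SP)
qed

theorem proposition2:
  assumes "CARD('n::finite) \<ge> 2"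
  shows "obviously_manipulable (CED :: 'n rule) \<and> obviously_manipulable (Pro :: 'n rule)"
proof -
  obtain i :: 'n where True by blast
  define N where "N = real CARD('n)"
  have N2: "N \<ge> 2" using assms unfolding N_def by simp
  define \<Omega> where "\<Omega> = N + 2"
  have O: "\<Omega> > 0" using N2 unfolding \<Omega>_def by simp
  have ON: "\<Omega> / N \<le> 2" using N2 unfolding \<Omega>_def by (simp add: field_simps)
  have ON0: "\<Omega> / N \<ge> 0" using N2 unfolding \<Omega>_def by simp
  have s1: "(\<Sum>j\<in>UNIV. peak (((\<lambda>_::'n. pr 0)(i := pr 1)) j)) = 1" by (rule sum_prof) simp
  have s0: "(\<Sum>j\<in>UNIV. peak (((\<lambda>_::'n. pr 0)(i := pr 0)) j)) = 0" by (rule sum_prof) simp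
  have ced: "obviously_manipulable (CED :: 'n rule)"
  proof (rule generic_om[of \<Omega> _ i "1 + (\<Omega> - 1) / N" "\<Omega> / N"])
    show "0 < \<Omega>" by (rule O)
  next
    fix R :: "'n \<Rightarrow> pref" assume R: "\<forall>j. R j \<in> SP"
    let ?P = "R(i := pr 0)"
    have pk: "\<And>j. 0 \<le> peak (?P j)" using SP_upd[OF R] by simp
    have pi: "peak (?P i) = 0" by (simp add: peak_pr)
    have S0: "0 \<le> (\<Sum>j\<in>UNIV. peak (?P j))" using pk by (simp add: sum_nonneg)
    show "0 \<le> CED ?P \<Omega> i \<and> CED ?P \<Omega> i \<le> 2"
    proof (cases "(\<Sum>j\<in>UNIV. peak (?P j)) \<ge> \<Omega>")
      case True
      then obtain d where "d \<ge> 0" "CED ?P \<Omega> i = max (peak (?P i) - d) 0"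
        using CED_short[of ?P \<Omega> i, OF pk _ O] by blast
      then show ?thesis using pi by simp
    next
      case False
      then have "CED ?P \<Omega> i = 0 + (\<Omega> - (\<Sum>j\<in>UNIV. peak (?P j))) / N"
        using CED_excess[of ?P \<Omega> i] pi unfolding N_def by simp
      moreover have "(\<Omega> - (\<Sum>j\<in>UNIV. peak (?P j))) / N \<le> \<Omega> / N"
        using S0 N2 by (simp add: divide_right_mono)
      moreover have "0 \<le> (\<Omega> - (\<Sum>j\<in>UNIV. peak (?P j))) / N"
        using False N2 by simp
      ultimately show ?thesis using ON by simp
    qed
  next
    show "CED ((\<lambda>_. pr 0)(i := pr 1)) \<Omega> i = 1 + (\<Omega> - 1) / N"
      using CED_excess[of "(\<lambda>_. pr 0)(i := pr 1)" \<Omega> i] s1 N2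
      unfolding \<Omega>_def N_def by (simp add: peak_pr)
  next
    show "0 \<le> 1 + (\<Omega> - 1) / N" using N2 unfolding \<Omega>_def by simp
  next
    show "1 < \<bar>1 + (\<Omega> - 1) / N - 1\<bar>" using N2 unfolding \<Omega>_def by (simp add: field_simps)
  next
    show "CED ((\<lambda>_. pr 0)(i := pr 0)) \<Omega> i = \<Omega> / N"
      using CED_excess[of "(\<lambda>_. pr 0)(i := pr 0)" \<Omega> i] s0 O
      unfolding N_def by (simp add: peak_pr)
  next
    show "0 \<le> \<Omega> / N" by (rule ON0)
  next
    show "\<bar>\<Omega> / N - 1\<bar> < \<bar>1 + (\<Omega> - 1) / N - 1\<bar>"
      using N2 unfolding \<Omega>_def by (simp add: field_simps)
  qed
  have pro: "obviously_manipulable (Pro :: 'n rule)"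
  proof (rule generic_om[of \<Omega> _ i "\<Omega>" "\<Omega> / N"])
    show "0 < \<Omega>" by (rule O)
  next
    fix R :: "'n \<Rightarrow> pref" assume R: "\<forall>j. R j \<in> SP"
    let ?P = "R(i := pr 0)"
    have pi: "peak (?P i) = 0" by (simp add: peak_pr)
    show "0 \<le> Pro ?P \<Omega> i \<and> Pro ?P \<Omega> i \<le> 2"
      using pi ON ON0 unfolding Pro_def N_def by simp
  next
    show "Pro ((\<lambda>_. pr 0)(i := pr 1)) \<Omega> i = \<Omega>"
      using s1 unfolding Pro_def by (simp add: peak_pr)
  next
    show "0 \<le> \<Omega>" using O by simp
  next
    show "1 < \<bar>\<Omega> - 1\<bar>" using N2 unfolding \<Omega>_def by simp
  next
    show "Pro ((\<lambda>_. pr 0)(i := pr 0)) \<Omega> i = \<Omega> / N"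
      using s0 unfolding Pro_def N_def by simp
  next
    show "0 \<le> \<Omega> / N" by (rule ON0)
  next
    show "\<bar>\<Omega> / N - 1\<bar> < \<bar>\<Omega> - 1\<bar>"
    proof -
      have h: "2 * N \<le> N * N" using N2 by (intro mult_right_mono) auto
      have "2 < N + N * N" using N2 h by linarith
      then show ?thesis using N2 unfolding \<Omega>_def by (simp add: field_simps)
    qed
  qed
  show ?thesis using ced pro by simp
qed

end
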